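(* Let $\alpha\in(0,1)$. If a deterministic algorithm for SSP is $(1+\alpha)$-consistent, then its robustness (on instances with $m$ machines) is at least $1+\frac{1-\alpha}{2\alpha}-O(\frac1m)$, where the $O(\cdot)$ hides a factor depending only on $\alpha$; this holds even when all jobs have equal processing times. In the special case of infinitesimal jobs, the robustness of a deterministic $(1+\alpha)$-consistent algorithm is at least $1+\frac{(1-\alpha)^2}{4\alpha}-O(\frac1m)$.
   Context: Scheduling with Speed Predictions (SSP). An instance consists of $n$ jobs with processing times $p_1,\dots,p_n\ge 0$ and $m$ machines with true speeds $s_1,\dots,s_m>0$; processing job $j$ on machine $i$ takes time $p_j/s_i$. For a bag (set of jobs) $B$, $p(B)=\sum_{j\in B}p_j$. In the partitioning stage the algorithm receives $\mathbf p$ and predicted speeds $\hat{\mathbf s}\ge 0$ (not $\mathbf s$) and partitions the jobs into $m$ possibly empty bags. In the scheduling stage $\mathbf s$ is revealed and each bag is assigned whole to a machine; the makespan is the maximum over machines $i$ of (total processing time assigned to $i$)$/s_i$. $opt(\mathbf p,\mathbf s)$ is the minimum makespan of assigning individual jobs knowing $\mathbf s$; $alg(\mathbf p,\hat{\mathbf s},\mathbf s)$ is the algorithm's makespan. An algorithm is $c$-consistent if $alg(\mathbf p,\mathbf s,\mathbf s)\le c\cdot opt(\mathbf p,\mathbf s)$ for all $\mathbf p,\mathbf s$; its robustness is $\sup_{\mathbf p,\hat{\mathbf s},\mathbf s} alg(\mathbf p,\hat{\mathbf s},\mathbf s)/opt(\mathbf p,\mathbf s)$. In the infinitesimal-jobs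 case, jobs are infinitesimally small, so the total load can be divided in the partitioning stage into $m$ bags of arbitrary (real, nonnegative) total processing times summing to the total load. *)

theory Defs
  imports Complex_Main "HOL-Library.FuncSet" "HOL-Library.Extended_Real"
begin

text \<open>Machines are indexed by {..<m}, jobs by {..<n}.
  Processing times p, true speeds s and predicted speeds sh are functions nat => real
  (only the entries below n resp. m are meaningful).\<close>

definition makespan :: "nat \<Rightarrow> nat \<Rightarrow> (nat \<Rightarrow> real) \<Rightarrow> (nat \<Rightarrow> real) \<Rightarrow> (nat \<Rightarrow> nat) \<Rightarrow> real" where
  "makespan m n p s f = Max ((\<lambda>i. (\<Sum>j\<in>{j. j < n \<and> f j = i}. p j) / s i) ` {..<m})"

definition opt :: "nat \<Rightarrow> nat \<Rightarrow> (nat \<Rightarrow> real) \<Rightarrow> (nat \<Rightarrow> real) \<Rightarrow> real" where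
  "opt m n p s = Min (makespan m n p s ` ({..<n} \<rightarrow>\<^sub>E {..<m}))"

text \<open>A deterministic SSP algorithm on m machines is a pair (part, sched):
  part n p sh j is the bag (in {..<m}) of job j, computed from p and the predicted speeds sh only;
  sched n p sh s b is the machine (in {..<m}) receiving bag b, computed once s is revealed.\<close>
definition valid_alg :: "nat \<Rightarrow> (nat \<Rightarrow> (nat \<Rightarrow> real) \<Rightarrow> (nat \<Rightarrow> real) \<Rightarrow> nat \<Rightarrow> nat)
    \<Rightarrow> (nat \<Rightarrow> (nat \<Rightarrow> real) \<Rightarrow> (nat \<Rightarrow> real) \<Rightarrow> (nat \<Rightarrow> real) \<Rightarrow> nat \<Rightarrow> nat) \<Rightarrow> bool" where
  "valid_alg m part sched \<longleftrightarrow>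
     (\<forall>n p sh j. j < n \<longrightarrow> part n p sh j < m) \<and>
     (\<forall>n p sh s b. b < m \<longrightarrow> sched n p sh s b < m)"

definition alg :: "nat \<Rightarrow> (nat \<Rightarrow> (nat \<Rightarrow> real) \<Rightarrow> (nat \<Rightarrow> real) \<Rightarrow> nat \<Rightarrow> nat)
    \<Rightarrow> (nat \<Rightarrow> (nat \<Rightarrow> real) \<Rightarrow> (nat \<Rightarrow> real) \<Rightarrow> (nat \<Rightarrow> real) \<Rightarrow> nat \<Rightarrow> nat)
    \<Rightarrow> nat \<Rightarrow> (nat \<Rightarrow> real) \<Rightarrow> (nat \<Rightarrow> real) \<Rightarrow> (nat \<Rightarrow> real) \<Rightarrow> real" where
  "alg m part sched n p sh s = makespan m n p s (\<lambda>j. sched n p sh s (part n p sh j))"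

definition valid_instance :: "nat \<Rightarrow> nat \<Rightarrow> (nat \<Rightarrow> real) \<Rightarrow> (nat \<Rightarrow> real) \<Rightarrow> bool" where
  "valid_instance m n p s \<longleftrightarrow> (\<forall>j<n. p j \<ge> 0) \<and> (\<forall>i<m. s i > 0)"

definition consistent :: "nat \<Rightarrow> real \<Rightarrow> (nat \<Rightarrow> (nat \<Rightarrow> real) \<Rightarrow> (nat \<Rightarrow> real) \<Rightarrow> nat \<Rightarrow> nat)
    \<Rightarrow> (nat \<Rightarrow> (nat \<Rightarrow> real) \<Rightarrow> (nat \<Rightarrow> real) \<Rightarrow> (nat \<Rightarrow> real) \<Rightarrow> nat \<Rightarrow> nat) \<Rightarrow> bool" where
  "consistent m c part sched \<longleftrightarrow>
     (\<forall>n p s. valid_instance m n p s \<longrightarrow> alg m part sched n p s s \<le> c * opt m n p s)"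

definition robustness_eq :: "nat \<Rightarrow> (nat \<Rightarrow> (nat \<Rightarrow> real) \<Rightarrow> (nat \<Rightarrow> real) \<Rightarrow> nat \<Rightarrow> nat)
    \<Rightarrow> (nat \<Rightarrow> (nat \<Rightarrow> real) \<Rightarrow> (nat \<Rightarrow> real) \<Rightarrow> (nat \<Rightarrow> real) \<Rightarrow> nat \<Rightarrow> nat) \<Rightarrow> ereal" where
  "robustness_eq m part sched =
     (SUP (n, p, sh, s) \<in> {(n, p, sh, s). valid_instance m n p s \<and> (\<forall>i<m. sh i \<ge> 0)
                             \<and> (\<exists>c. \<forall>j<n. p j = c) \<and> opt m n p s > 0}.
        ereal (alg m part sched n p sh s / opt m n p s))"

text \<open>Infinitesimal jobs. Total load L; the partition stage chooses bag sizes
  part L sh b (b < m), nonnegative and summing to L; sched L sh s b is the machine of bag b.\<close>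
definition valid_alg_inf :: "nat \<Rightarrow> (real \<Rightarrow> (nat \<Rightarrow> real) \<Rightarrow> nat \<Rightarrow> real)
    \<Rightarrow> (real \<Rightarrow> (nat \<Rightarrow> real) \<Rightarrow> (nat \<Rightarrow> real) \<Rightarrow> nat \<Rightarrow> nat) \<Rightarrow> bool" where
  "valid_alg_inf m part sched \<longleftrightarrow>
     (\<forall>L sh. L \<ge> 0 \<longrightarrow> (\<forall>b<m. part L sh b \<ge> 0) \<and> (\<Sum>b<m. part L sh b) = L) \<and>
     (\<forall>L sh s b. b < m \<longrightarrow> sched L sh s b < m)"

text \<open>Optimal makespan with infinitesimal jobs (load split proportionally to speeds).\<close>
definition opt_inf :: "nat \<Rightarrow> real \<Rightarrow> (nat \<Rightarrow> real) \<Rightarrow> real" where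
  "opt_inf m L s = L / (\<Sum>i<m. s i)"

definition alg_inf :: "nat \<Rightarrow> (real \<Rightarrow> (nat \<Rightarrow> real) \<Rightarrow> nat \<Rightarrow> real)
    \<Rightarrow> (real \<Rightarrow> (nat \<Rightarrow> real) \<Rightarrow> (nat \<Rightarrow> real) \<Rightarrow> nat \<Rightarrow> nat)
    \<Rightarrow> real \<Rightarrow> (nat \<Rightarrow> real) \<Rightarrow> (nat \<Rightarrow> real) \<Rightarrow> real" where
  "alg_inf m part sched L sh s =
     Max ((\<lambda>i. (\<Sum>b\<in>{b. b < m \<and> sched L sh s b = i}. part L sh b) / s i) ` {..<m})"

definition consistent_inf :: "nat \<Rightarrow> real \<Rightarrow> (real \<Rightarrow> (nat \<Rightarrow> real) \<Rightarrow> nat \<Rightarrow> real)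
    \<Rightarrow> (real \<Rightarrow> (nat \<Rightarrow> real) \<Rightarrow> (nat \<Rightarrow> real) \<Rightarrow> nat \<Rightarrow> nat) \<Rightarrow> bool" where
  "consistent_inf m c part sched \<longleftrightarrow>
     (\<forall>L s. L \<ge> 0 \<and> (\<forall>i<m. s i > 0) \<longrightarrow> alg_inf m part sched L s s \<le> c * opt_inf m L s)"

definition robustness_inf :: "nat \<Rightarrow> (real \<Rightarrow> (nat \<Rightarrow> real) \<Rightarrow> nat \<Rightarrow> real)
    \<Rightarrow> (real \<Rightarrow> (nat \<Rightarrow> real) \<Rightarrow> (nat \<Rightarrow> real) \<Rightarrow> nat \<Rightarrow> nat) \<Rightarrow> ereal" where
  "robustness_inf m part sched =
     (SUP (L, sh, s) \<in> {(L, sh, s). L > 0 \<and> (\<forall>i<m. sh i \<ge> 0) \<and> (\<forall>i<m. s i > 0)}.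
        ereal (alg_inf m part sched L sh s / opt_inf m L s))"

end

theory Submission
  imports Defs
begin

lemma mk_ge:
  assumes "i < m"
  shows "(\<Sum>j\<in>{j. j < n \<and> f j = i}. p j) / s i \<le> makespan m n p s f"
  unfolding makespan_def using assms by (intro Max_ge) auto

lemma mk_le:
  assumes "m \<ge> 1" "\<And>i. i < m \<Longrightarrow> (\<Sum>j\<in>{j. j < n \<and> f j = i}. p j) / s i \<le> c"
  shows "makespan m n p s f \<le> c"
proof -
  have "0 \<in> {..<m}" using assms(1) by auto
  then have "{..<m} \<noteq> {}" by blast
  then show ?thesis unfolding makespan_def using assms by (subst Max_le_iff) auto
qed

lemma opt_le:
  assumes "f \<in> {..<n} \<rightarrow>\<^sub>E {..<m}"
  shows "opt m n p s \<le> makespan m n p s f"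
  unfolding opt_def using assms by (intro Min_le) (auto simp: finite_PiE)

lemma opt_ge:
  assumes "m \<ge> 1" "\<And>f. f \<in> {..<n} \<rightarrow>\<^sub>E {..<m} \<Longrightarrow> c \<le> makespan m n p s f"
  shows "c \<le> opt m n p s"
proof -
  have "(\<lambda>j. if j < n then 0 else undefined) \<in> {..<n} \<rightarrow>\<^sub>E {..<m}" using assms(1) by (auto simp: PiE_def extensional_def)
  then have ne: "{..<n} \<rightarrow>\<^sub>E {..<m} \<noteq> {}" by blast
  show ?thesis unfolding opt_def using assms ne by (subst Min_ge_iff) (auto simp: finite_PiE)
qed

lemma card_split: "card {j. j < n \<and> Q j} + card {j. j < n \<and> \<not> Q j} = n"
proof -
  have "{j. j < n \<and> Q j} \<union> {j. j < n \<and> \<not> Q j} = {..<n}" by auto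
  moreover have "card ({j. j < n \<and> Q j} \<union> {j. j < n \<and> \<not> Q j}) = card {j. j < n \<and> Q j} + card {j. j < n \<and> \<not> Q j}"
    by (rule card_Un_disjoint) auto
  ultimately show ?thesis by simp
qed

lemma disc:
  fixes \<alpha> :: real
  assumes a0: "0 < \<alpha>" and a1: "\<alpha> < 1" and m1: "m \<ge> 1"
    and va: "valid_alg m part sched" and co: "consistent m (1 + \<alpha>) part sched"
  shows "ereal ((1 + \<alpha>) / (2 * \<alpha>) - ((1 + \<alpha>) / \<alpha>\<^sup>2) / real m) \<le> robustness_eq m part sched"
proof -
  define n where "n = 2 * m - 1"
  define p :: "nat \<Rightarrow> real" where "p = (\<lambda>_. 1)"
  define sh :: "nat \<Rightarrow> real" where "sh = (\<lambda>i. if i = 0 then real m else 1)"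
  define s1 :: "nat \<Rightarrow> real" where "s1 = (\<lambda>_. 1)"
  have n1: "n \<ge> 1" and rn: "real n = 2 * real m - 1" using m1 by (auto simp: n_def)
  have sum1: "\<And>S. (\<Sum>j\<in>S. p j) = real (card S)" by (simp add: p_def)
  define f0 where "f0 = (\<lambda>j. if j < n then (if j < m then 0 else j - m + 1) else undefined)"
  have f0E: "f0 \<in> {..<n} \<rightarrow>\<^sub>E {..<m}" unfolding f0_def n_def using m1
    by (auto simp: PiE_def extensional_def)
  have "makespan m n p sh f0 \<le> 1"
  proof (rule mk_le[OF m1])
    fix i assume i: "i < m"
    show "(\<Sum>j\<in>{j. j < n \<and> f0 j = i}. p j) / sh i \<le> 1"
    proof (cases "i = 0")
      case True
      have "{j. j < n \<and> f0 j = i} = {..<m}" using True m1 unfolding f0_def n_def by auto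
      then show ?thesis using True m1 by (simp add: sum1 sh_def)
    next
      case False
      have "{j. j < n \<and> f0 j = i} \<subseteq> {i + m - 1}" using False unfolding f0_def by auto
      then have "card {j. j < n \<and> f0 j = i} \<le> card {i + m - 1}" by (rule card_mono[rotated]) auto
      then have "card {j. j < n \<and> f0 j = i} \<le> 1" by simp
      then show ?thesis using False by (simp add: sum1 sh_def)
    qed
  qed
  then have optp: "opt m n p sh \<le> 1" using opt_le[OF f0E, of p sh] by linarith
  have vip: "valid_instance m n p sh" using m1 by (simp add: valid_instance_def p_def sh_def)
  have "alg m part sched n p sh sh \<le> (1 + \<alpha>) * opt m n p sh"
    using co vip unfolding consistent_def by blast
  also have "\<dots> \<le> (1 + \<alpha>) * 1" using optp a0 by (intro mult_left_mono) auto
  finally have algp: "alg m part sched n p sh sh \<le> 1 + \<alpha>" by simp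
  define P where "P = part n p sh"
  define \<sigma> where "\<sigma> = sched n p sh sh"
  have Pm: "\<And>j. j < n \<Longrightarrow> P j < m" using va unfolding valid_alg_def P_def by blast
  have \<sigma>m: "\<And>b. b < m \<Longrightarrow> \<sigma> b < m" using va unfolding valid_alg_def \<sigma>_def by blast
  have load: "real (card {j. j < n \<and> \<sigma> (P j) = i}) / sh i \<le> 1 + \<alpha>" if i: "i < m" for i
  proof -
    have "(\<Sum>j\<in>{j. j < n \<and> \<sigma> (P j) = i}. p j) / sh i \<le> makespan m n p sh (\<lambda>j. \<sigma> (P j))"
      by (rule mk_ge[OF i])
    also have "\<dots> = alg m part sched n p sh sh" by (simp add: alg_def P_def \<sigma>_def)
    finally show ?thesis using algp by (simp add: sum1)
  qed
  define bs where "bs b = card {j. j < n \<and> P j = b}" for b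
  have bsB: "bs b \<le> 1" if b: "b < m" "\<sigma> b \<noteq> 0" for b
  proof -
    have "bs b \<le> card {j. j < n \<and> \<sigma> (P j) = \<sigma> b}" unfolding bs_def by (rule card_mono) auto
    moreover have "real (card {j. j < n \<and> \<sigma> (P j) = \<sigma> b}) \<le> 1 + \<alpha>"
      using load[OF \<sigma>m[OF b(1)]] b(2) by (simp add: sh_def)
    ultimately have "real (bs b) < 2" using a1 by (smt (verit) of_nat_mono)
    then show "bs b \<le> 1" by simp
  qed
  have L0: "real (card {j. j < n \<and> \<sigma> (P j) = 0}) \<le> (1 + \<alpha>) * real m"
    using load[of 0] m1 by (simp add: sh_def field_simps)
  define A where "A = {b. b < m \<and> \<sigma> b = 0}"
  define B where "B = {b. b < m \<and> \<not> \<sigma> b = 0}"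
  define k where "k = card A"
  have cAB: "k + card B = m" unfolding k_def A_def B_def by (rule card_split)
  define M where "M = Max (bs ` {..<m})"
  have bsM: "\<And>b. b < m \<Longrightarrow> bs b \<le> M" unfolding M_def by (intro Max_ge) auto
  have c0: "card {j. j < n \<and> \<sigma> (P j) = 0} \<le> k * M"
  proof -
    have "{j. j < n \<and> \<sigma> (P j) = 0} \<subseteq> (\<Union>b\<in>A. {j. j < n \<and> P j = b})" using Pm unfolding A_def by auto
    then have "card {j. j < n \<and> \<sigma> (P j) = 0} \<le> card (\<Union>b\<in>A. {j. j < n \<and> P j = b})"
      by (rule card_mono[rotated]) (auto simp: A_def)
    also have "\<dots> \<le> (\<Sum>b\<in>A. card {j. j < n \<and> P j = b})" by (rule card_UN_le) (simp add: A_def)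
    also have "\<dots> \<le> (\<Sum>b\<in>A. M)" by (rule sum_mono) (auto simp: A_def bs_def[symmetric] bsM)
    also have "\<dots> = k * M" by (simp add: k_def)
    finally show ?thesis .
  qed
  have c1: "card {j. j < n \<and> \<not> \<sigma> (P j) = 0} \<le> card B"
  proof -
    have "{j. j < n \<and> \<not> \<sigma> (P j) = 0} \<subseteq> (\<Union>b\<in>B. {j. j < n \<and> P j = b})" using Pm unfolding B_def by auto
    then have "card {j. j < n \<and> \<not> \<sigma> (P j) = 0} \<le> card (\<Union>b\<in>B. {j. j < n \<and> P j = b})"
      by (rule card_mono[rotated]) (auto simp: B_def)
    also have "\<dots> \<le> (\<Sum>b\<in>B. card {j. j < n \<and> P j = b})" by (rule card_UN_le) (simp add: B_def)
    also have "\<dots> \<le> (\<Sum>b\<in>B. 1)" by (rule sum_mono) (use bsB in \<open>auto simp: B_def bs_def[symmetric]\<close>)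
    also have "\<dots> = card B" by simp
    finally show ?thesis .
  qed
  have ctot: "card {j. j < n \<and> \<sigma> (P j) = 0} + card {j. j < n \<and> \<not> \<sigma> (P j) = 0} = n"
    by (rule card_split)
  have M1: "M \<ge> 1"
  proof -
    have "0 < bs (P 0)" unfolding bs_def using n1 by (subst card_gt_0_iff) force
    moreover have "bs (P 0) \<le> M" using bsM Pm n1 by simp
    ultimately show ?thesis by simp
  qed
  have key: "(real M - 1) * (\<alpha> * real m + 1) \<ge> real m - 1"
  proof -
    have r0: "real (card {j. j < n \<and> \<sigma> (P j) = 0}) \<le> real k * real M" using c0
      by (metis of_nat_mono of_nat_mult)
    have r1: "real (card {j. j < n \<and> \<not> \<sigma> (P j) = 0}) \<le> real m - real k" using c1 cAB
      by (metis add_diff_cancel_left' of_nat_add of_nat_mono diff_add_cancel add.commute)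
    have rt: "real (card {j. j < n \<and> \<sigma> (P j) = 0}) + real (card {j. j < n \<and> \<not> \<sigma> (P j) = 0}) = 2 * real m - 1"
      using ctot rn by (metis of_nat_add)
    have kb: "real k \<le> \<alpha> * real m + 1" using r1 rt L0 by (simp add: algebra_simps)
    have kM: "real k * (real M - 1) \<ge> real m - 1" using r0 r1 rt by (simp add: algebra_simps)
    have "real k * (real M - 1) \<le> (\<alpha> * real m + 1) * (real M - 1)"
      using kb M1 by (intro mult_right_mono) auto
    then show ?thesis using kM by (simp add: algebra_simps)
  qed
  define \<sigma>' where "\<sigma>' = sched n p sh s1"
  have "0 \<in> {..<m}" using m1 by simp
  then have "bs ` {..<m} \<noteq> {}" by blast
  then have "M \<in> bs ` {..<m}" unfolding M_def by (intro Max_in) auto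
  then obtain bst where bst: "bst < m" "bs bst = M" by auto
  have algM: "real M \<le> alg m part sched n p sh s1"
  proof -
    have "bs bst \<le> card {j. j < n \<and> \<sigma>' (P j) = \<sigma>' bst}" unfolding bs_def by (rule card_mono) auto
    then have "real M \<le> (\<Sum>j\<in>{j. j < n \<and> \<sigma>' (P j) = \<sigma>' bst}. p j) / s1 (\<sigma>' bst)"
      using bst by (simp add: sum1 s1_def)
    also have "\<dots> \<le> makespan m n p s1 (\<lambda>j. \<sigma>' (P j))"
      by (rule mk_ge) (use va bst in \<open>simp add: valid_alg_def \<sigma>'_def\<close>)
    also have "\<dots> = alg m part sched n p sh s1" by (simp add: alg_def P_def \<sigma>'_def)
    finally show ?thesis .
  qed
  define f1 where "f1 = (\<lambda>j. if j < n then j div 2 else undefined)"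
  have f1E: "f1 \<in> {..<n} \<rightarrow>\<^sub>E {..<m}" unfolding f1_def n_def using m1
    by (auto simp: PiE_def extensional_def)
  have "makespan m n p s1 f1 \<le> 2"
  proof (rule mk_le[OF m1])
    fix i assume i: "i < m"
    have "{j. j < n \<and> f1 j = i} \<subseteq> {2 * i, 2 * i + 1}" unfolding f1_def by auto
    then have "card {j. j < n \<and> f1 j = i} \<le> card {2 * i, 2 * i + 1}" by (rule card_mono[rotated]) auto
    also have "\<dots> \<le> 2" by (simp add: card_insert_le_m1)
    finally show "(\<Sum>j\<in>{j. j < n \<and> f1 j = i}. p j) / s1 i \<le> 2" by (simp add: sum1 s1_def)
  qed
  then have opt2: "opt m n p s1 \<le> 2" using opt_le[OF f1E, of p s1] by linarith
  have opt1: "1 \<le> opt m n p s1"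
  proof (rule opt_ge[OF m1])
    fix f assume f: "f \<in> {..<n} \<rightarrow>\<^sub>E {..<m}"
    have f0m: "f 0 < m" using PiE_mem[OF f, of 0] n1 by simp
    have "0 < card {j. j < n \<and> f j = f 0}" using n1 by (subst card_gt_0_iff) force
    then have "1 \<le> (\<Sum>j\<in>{j. j < n \<and> f j = f 0}. p j) / s1 (f 0)" by (simp add: sum1 s1_def)
    also have "\<dots> \<le> makespan m n p s1 f" by (rule mk_ge[OF f0m])
    finally show "1 \<le> makespan m n p s1 f" .
  qed
  have ratio: "real M / 2 \<le> alg m part sched n p sh s1 / opt m n p s1"
  proof -
    have "real M / 2 \<le> real M / opt m n p s1" using opt1 opt2 M1
      by (intro divide_left_mono) auto
    also have "\<dots> \<le> alg m part sched n p sh s1 / opt m n p s1" using algM opt1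
      by (intro divide_right_mono) auto
    finally show ?thesis .
  qed
  have tgt: "(1 + \<alpha>) / (2 * \<alpha>) - ((1 + \<alpha>) / \<alpha>\<^sup>2) / real m \<le> real M / 2"
  proof -
    have "\<alpha> * real m \<ge> 0" using a0 by simp
    then have pos: "\<alpha> * real m + 1 > 0" by linarith
    have e1: "real M - 1 \<ge> (real m - 1) / (\<alpha> * real m + 1)" using key pos
      by (simp add: pos_divide_le_eq mult.commute)
    have e2: "1 / \<alpha> - (real m - 1) / (\<alpha> * real m + 1) = (1 + \<alpha>) / (\<alpha> * (\<alpha> * real m + 1))"
      using a0 pos by (simp add: field_simps)
    have e3: "(1 + \<alpha>) / (\<alpha> * (\<alpha> * real m + 1)) \<le> (1 + \<alpha>) / (\<alpha>\<^sup>2 * real m)"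
    proof -
      have h1: "\<alpha>\<^sup>2 * real m \<le> \<alpha> * (\<alpha> * real m + 1)" using a0 by (simp add: power2_eq_square algebra_simps)
      have h2: "0 < \<alpha>\<^sup>2 * real m" using a0 m1 by simp
      have h3: "0 < \<alpha> * (\<alpha> * real m + 1)" using a0 pos by simp
      show ?thesis using h1 h2 h3 a0 by (intro divide_left_mono) (auto intro: mult_pos_pos)
    qed
    have e4: "(1 + \<alpha>) / (2 * \<alpha>) = (1 / \<alpha> + 1) / 2" using a0 by (simp add: field_simps)
    have e5: "(1 + \<alpha>) / (\<alpha>\<^sup>2 * real m) = ((1 + \<alpha>) / \<alpha>\<^sup>2) / real m" by simp
    have e6: "((1 + \<alpha>) / \<alpha>\<^sup>2) / real m \<ge> 0" using a0 by simp
    define W where "W = ((1 + \<alpha>) / \<alpha>\<^sup>2) / real m"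
    define X where "X = 1 / \<alpha>"
    have "real M \<ge> 1 + X - W" using e1 e2 e3 e5 unfolding W_def X_def by linarith
    moreover have "W \<ge> 0" unfolding W_def using e6 .
    ultimately have "(X + 1) / 2 - W \<le> real M / 2" by (simp add: field_simps)
    then show ?thesis unfolding e4 W_def X_def .
  qed
  have mem: "(n, p, sh, s1) \<in> {(n, p, sh, s). valid_instance m n p s \<and> (\<forall>i<m. sh i \<ge> 0)
                             \<and> (\<exists>c. \<forall>j<n. p j = c) \<and> opt m n p s > 0}"
    using opt1 by (auto simp: valid_instance_def p_def sh_def s1_def)
  have "ereal ((1 + \<alpha>) / (2 * \<alpha>) - ((1 + \<alpha>) / \<alpha>\<^sup>2) / real m) \<le> ereal (alg m part sched n p sh s1 / opt m n p s1)"
    using order_trans[OF tgt ratio] by simp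
  also have "\<dots> \<le> robustness_eq m part sched"
    unfolding robustness_eq_def using mem by (rule SUP_upper2) simp
  finally show ?thesis .
qed


lemma infl:
  fixes \<alpha> :: real
  assumes a0: "0 < \<alpha>" and a1: "\<alpha> < 1" and m1: "m \<ge> 1"
    and va: "valid_alg_inf m part sched" and co: "consistent_inf m (1 + \<alpha>) part sched"
  shows "ereal ((1 + \<alpha>)\<^sup>2 / (4 * \<alpha>) - ((1 + \<alpha>)\<^sup>2 / (4 * \<alpha>\<^sup>2 * (1 - \<alpha>))) / real m) \<le> robustness_inf m part sched"
proof -
  define L :: real where "L = 2 * real m - 1"
  define sh :: "nat \<Rightarrow> real" where "sh = (\<lambda>i. if i = 0 then real m else 1)"
  define s1 :: "nat \<Rightarrow> real" where "s1 = (\<lambda>_. 1)"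
  have L0: "L > 0" using m1 by (simp add: L_def)
  obtain m' where m': "m = Suc m'" using m1 by (cases m) auto
  have ssh: "(\<Sum>i<m. sh i) = L" unfolding m' L_def
    by (subst sum.lessThan_Suc_shift) (simp add: sh_def m')
  have ss1: "(\<Sum>i<m. s1 i) = real m" by (simp add: s1_def)
  have optp: "opt_inf m L sh = 1" unfolding opt_inf_def ssh using L0 by simp
  have shpos: "\<forall>i<m. sh i > 0" using m1 by (simp add: sh_def)
  have algp: "alg_inf m part sched L sh sh \<le> 1 + \<alpha>"
  proof -
    have "alg_inf m part sched L sh sh \<le> (1 + \<alpha>) * opt_inf m L sh"
      using co L0 shpos unfolding consistent_inf_def by simp
    then show ?thesis using optp by simp
  qed
  define P where "P = part L sh"
  define \<sigma> where "\<sigma> = sched L sh sh"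
  have Pnn: "\<And>b. b < m \<Longrightarrow> P b \<ge> 0" and Psum: "(\<Sum>b<m. P b) = L"
    using va L0 unfolding valid_alg_inf_def P_def by auto
  have \<sigma>m: "\<And>b. b < m \<Longrightarrow> \<sigma> b < m" using va unfolding valid_alg_inf_def \<sigma>_def by blast
  have load: "(\<Sum>b\<in>{b. b < m \<and> \<sigma> b = i}. P b) / sh i \<le> 1 + \<alpha>" if i: "i < m" for i
  proof -
    have "(\<Sum>b\<in>{b. b < m \<and> \<sigma> b = i}. P b) / sh i \<le> alg_inf m part sched L sh sh"
      unfolding alg_inf_def P_def \<sigma>_def using i by (intro Max_ge) auto
    then show ?thesis using algp by linarith
  qed
  have PB: "P b \<le> 1 + \<alpha>" if b: "b < m" "\<sigma> b \<noteq> 0" for b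
  proof -
    have "P b \<le> (\<Sum>b'\<in>{b'. b' < m \<and> \<sigma> b' = \<sigma> b}. P b')"
      by (rule member_le_sum) (use b Pnn in auto)
    moreover have "(\<Sum>b'\<in>{b'. b' < m \<and> \<sigma> b' = \<sigma> b}. P b') \<le> 1 + \<alpha>"
      using load[OF \<sigma>m[OF b(1)]] b(2) by (simp add: sh_def)
    ultimately show ?thesis by linarith
  qed
  define A where "A = {b. b < m \<and> \<sigma> b = 0}"
  define B where "B = {b. b < m \<and> \<not> \<sigma> b = 0}"
  define k where "k = card A"
  have cAB: "k + card B = m" unfolding k_def A_def B_def by (rule card_split)
  define F where "F = (\<Sum>b\<in>A. P b)"
  define G where "G = (\<Sum>b\<in>B. P b)"
  have FG: "F + G = L"
  proof -
    have "{..<m} = A \<union> B" unfolding A_def B_def by auto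
    then have "(\<Sum>b<m. P b) = (\<Sum>b\<in>A \<union> B. P b)" by simp
    also have "\<dots> = F + G" unfolding F_def G_def by (rule sum.union_disjoint) (auto simp: A_def B_def)
    finally show ?thesis using Psum by simp
  qed
  have Fb: "F \<le> (1 + \<alpha>) * real m" using load[of 0] m1 by (simp add: sh_def F_def A_def field_simps)
  define M where "M = Max (P ` {..<m})"
  have PM: "\<And>b. b < m \<Longrightarrow> P b \<le> M" unfolding M_def by (intro Max_ge) auto
  have Gb: "G \<le> real (card B) * (1 + \<alpha>)"
  proof -
    have "G \<le> (\<Sum>b\<in>B. 1 + \<alpha>)" unfolding G_def by (rule sum_mono) (use PB in \<open>auto simp: B_def\<close>)
    then show ?thesis by simp
  qed
  have FM: "F \<le> real k * M"
  proof -
    have "F \<le> (\<Sum>b\<in>A. M)" unfolding F_def by (rule sum_mono) (use PM in \<open>auto simp: A_def\<close>)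
    then show ?thesis by (simp add: k_def)
  qed
  have "0 \<in> {..<m}" using m1 by simp
  then have ne: "P ` {..<m} \<noteq> {}" by blast
  then have "M \<in> P ` {..<m}" unfolding M_def by (intro Max_in) auto
  then obtain bst where bst: "bst < m" "P bst = M" by auto
  have M0: "M \<ge> 0" using Pnn bst by force
  define \<sigma>' where "\<sigma>' = sched L sh s1"
  have algM: "M \<le> alg_inf m part sched L sh s1"
  proof -
    have "P bst \<le> (\<Sum>b'\<in>{b'. b' < m \<and> \<sigma>' b' = \<sigma>' bst}. P b')"
      by (rule member_le_sum) (use bst Pnn in auto)
    also have "\<dots> = (\<Sum>b'\<in>{b'. b' < m \<and> \<sigma>' b' = \<sigma>' bst}. P b') / s1 (\<sigma>' bst)" by (simp add: s1_def)
    also have "\<dots> \<le> alg_inf m part sched L sh s1"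
      unfolding alg_inf_def P_def \<sigma>'_def using bst va unfolding valid_alg_inf_def
      by (intro Max_ge) (auto simp: P_def \<sigma>'_def)
    finally show ?thesis using bst by simp
  qed
  have opt1: "opt_inf m L s1 = L / real m" unfolding opt_inf_def ss1 ..
  have optpos: "opt_inf m L s1 > 0" using opt1 L0 m1 by simp
  have opt2: "opt_inf m L s1 \<le> 2" unfolding opt1 using m1 by (simp add: L_def pos_divide_le_eq)
  have ratio: "M / 2 \<le> alg_inf m part sched L sh s1 / opt_inf m L s1"
  proof -
    have "M / 2 \<le> M / opt_inf m L s1" using optpos opt2 M0
      by (intro divide_left_mono) auto
    also have "\<dots> \<le> alg_inf m part sched L sh s1 / opt_inf m L s1" using algM optpos
      by (intro divide_right_mono) auto
    finally show ?thesis .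
  qed
  define C0 where "C0 = (1 + \<alpha>)\<^sup>2 / (4 * \<alpha>\<^sup>2 * (1 - \<alpha>))"
  have C0pos: "C0 > 0" unfolding C0_def using a0 a1 by (intro divide_pos_pos) auto
  have tgt: "(1 + \<alpha>)\<^sup>2 / (4 * \<alpha>) - C0 / real m \<le> M / 2"
  proof (cases "real m * (1 - \<alpha>) \<le> 1")
    case True
    have id: "(1 + \<alpha>)\<^sup>2 / (4 * \<alpha>) = (C0 / real m) * (\<alpha> * ((1 - \<alpha>) * real m))"
      unfolding C0_def using a0 a1 m1 by (simp add: field_simps power2_eq_square)
    have "\<alpha> * ((1 - \<alpha>) * real m) \<le> 1 * 1"
      using True a0 a1 by (intro mult_mono) (auto simp: mult.commute)
    moreover have "C0 / real m \<ge> 0" using C0pos by simp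
    ultimately have "(C0 / real m) * (\<alpha> * ((1 - \<alpha>) * real m)) \<le> C0 / real m"
      using mult_left_mono by fastforce
    then have "(1 + \<alpha>)\<^sup>2 / (4 * \<alpha>) - C0 / real m \<le> 0" using id by linarith
    then show ?thesis using M0 by simp
  next
    case False
    have cB: "real (card B) = real m - real k" using cAB by (metis add_diff_cancel_left' of_nat_add)
    have Gb': "G \<le> real m + \<alpha> * real m - real k - \<alpha> * real k"
    proof -
      have "G \<le> (real m - real k) * (1 + \<alpha>)" using Gb cB by simp
      then show ?thesis by (simp add: algebra_simps)
    qed
    have Fb': "F \<le> real m + \<alpha> * real m" using Fb by (simp add: algebra_simps)
    have kb: "real k * (1 + \<alpha>) \<le> 2 * \<alpha> * real m + 1"
    proof -
      have "real k + \<alpha> * real k \<le> 2 * \<alpha> * real m + 1" using FG Fb' Gb' unfolding L_def by linarith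
      then show ?thesis by (simp add: algebra_simps)
    qed
    have kM: "real k * (M - (1 + \<alpha>)) \<ge> real m * (1 - \<alpha>) - 1"
    proof -
      have "real k * M \<ge> real m - \<alpha> * real m - 1 + real k + \<alpha> * real k" using FG FM Gb' unfolding L_def by linarith
      then show ?thesis by (simp add: algebra_simps)
    qed
    have pos1: "real m * (1 - \<alpha>) - 1 > 0" using False by simp
    have Mp: "M - (1 + \<alpha>) > 0"
    proof (rule ccontr)
      assume "\<not> M - (1 + \<alpha>) > 0"
      then have "real k * (M - (1 + \<alpha>)) \<le> 0" by (simp add: mult_nonneg_nonpos)
      then show False using kM pos1 by linarith
    qed
    have "(M - (1 + \<alpha>)) * (real k * (1 + \<alpha>)) \<le> (M - (1 + \<alpha>)) * (2 * \<alpha> * real m + 1)"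
      using kb Mp by (intro mult_left_mono) auto
    moreover have "(M - (1 + \<alpha>)) * (real k * (1 + \<alpha>)) \<ge> (real m * (1 - \<alpha>) - 1) * (1 + \<alpha>)"
      using kM a0 by (simp add: mult.assoc mult.left_commute mult_right_mono)
    ultimately have k2: "(M - (1 + \<alpha>)) * (2 * \<alpha> * real m + 1) \<ge> (real m * (1 - \<alpha>) - 1) * (1 + \<alpha>)"
      by linarith
    have "2 * \<alpha> * real m \<ge> 0" using a0 by simp
    then have pos: "2 * \<alpha> * real m + 1 > 0" by linarith
    have e1: "M - (1 + \<alpha>) \<ge> (real m * (1 - \<alpha>) - 1) * (1 + \<alpha>) / (2 * \<alpha> * real m + 1)"
      using k2 pos by (simp add: pos_divide_le_eq)
    have e2: "(1 + \<alpha>) * (1 - \<alpha>) / (2 * \<alpha>) - (real m * (1 - \<alpha>) - 1) * (1 + \<alpha>) / (2 * \<alpha> * real m + 1)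
        = (1 + \<alpha>)\<^sup>2 / (2 * \<alpha> * (2 * \<alpha> * real m + 1))"
      using a0 pos by (simp add: field_simps power2_eq_square)
    have e3: "(1 + \<alpha>)\<^sup>2 / (2 * \<alpha> * (2 * \<alpha> * real m + 1)) \<le> 2 * C0 / real m"
    proof -
      have "(1 + \<alpha>)\<^sup>2 / (2 * \<alpha> * (2 * \<alpha> * real m + 1)) \<le> (1 + \<alpha>)\<^sup>2 / (2 * \<alpha> * (2 * \<alpha> * real m))"
        using a0 m1 by (intro divide_left_mono) (auto intro!: mult_pos_pos add_pos_nonneg)
      also have "\<dots> = (1 + \<alpha>)\<^sup>2 / (4 * \<alpha>\<^sup>2 * real m)" by (simp add: power2_eq_square)
      also have "\<dots> \<le> (1 + \<alpha>)\<^sup>2 / (4 * \<alpha>\<^sup>2 * real m * (1 - \<alpha>))"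
        using a0 a1 m1 by (intro divide_left_mono) (auto intro!: mult_pos_pos)
      also have "\<dots> = C0 / real m" unfolding C0_def by (simp add: field_simps)
      also have "\<dots> \<le> 2 * C0 / real m" using C0pos by (simp add: divide_right_mono)
      finally show ?thesis .
    qed
    have e4: "(1 + \<alpha>)\<^sup>2 / (4 * \<alpha>) = ((1 + \<alpha>) + (1 + \<alpha>) * (1 - \<alpha>) / (2 * \<alpha>)) / 2"
      using a0 by (simp add: field_simps power2_eq_square)
    define X where "X = (1 + \<alpha>) * (1 - \<alpha>) / (2 * \<alpha>)"
    define W where "W = C0 / real m"
    have W0: "W \<ge> 0" unfolding W_def using C0pos by simp
    have "M \<ge> (1 + \<alpha>) + X - 2 * W" using e1 e2 e3 unfolding X_def W_def by simp
    then have "((1 + \<alpha>) + X) / 2 - W \<le> M / 2" using W0 by (simp add: field_simps)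
    then show ?thesis unfolding e4 X_def W_def .
  qed
  have mem: "(L, sh, s1) \<in> {(L, sh, s). L > 0 \<and> (\<forall>i<m. sh i \<ge> 0) \<and> (\<forall>i<m. s i > 0)}"
    using L0 by (auto simp: sh_def s1_def)
  have "ereal ((1 + \<alpha>)\<^sup>2 / (4 * \<alpha>) - C0 / real m) \<le> ereal (alg_inf m part sched L sh s1 / opt_inf m L s1)"
    using order_trans[OF tgt ratio] by simp
  also have "\<dots> \<le> robustness_inf m part sched"
    unfolding robustness_inf_def using mem by (rule SUP_upper2) simp
  finally show ?thesis unfolding C0_def .
qed

theorem theorem1:
  fixes \<alpha> :: real
  assumes "0 < \<alpha>" and "\<alpha> < 1"
  shows "(\<exists>C. \<forall>m::nat. \<forall>part sched. m \<ge> 1 \<and> valid_alg m part sched \<and> consistent m (1 + \<alpha>) part sched \<longrightarrow>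
            robustness_eq m part sched \<ge> ereal (1 + (1 - \<alpha>) / (2 * \<alpha>) - C / real m))
       \<and> (\<exists>C. \<forall>m::nat. \<forall>part sched. m \<ge> 1 \<and> valid_alg_inf m part sched \<and> consistent_inf m (1 + \<alpha>) part sched \<longrightarrow>
            robustness_inf m part sched \<ge> ereal (1 + (1 - \<alpha>)\<^sup>2 / (4 * \<alpha>) - C / real m))"
proof (intro conjI)
  have e1: "1 + (1 - \<alpha>) / (2 * \<alpha>) = (1 + \<alpha>) / (2 * \<alpha>)" using assms by (simp add: field_simps)
  show "\<exists>C. \<forall>m::nat. \<forall>part sched. m \<ge> 1 \<and> valid_alg m part sched \<and> consistent m (1 + \<alpha>) part sched \<longrightarrow>
            robustness_eq m part sched \<ge> ereal (1 + (1 - \<alpha>) / (2 * \<alpha>) - C / real m)"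
    unfolding e1 using disc[OF assms] by blast
  have e2: "1 + (1 - \<alpha>)\<^sup>2 / (4 * \<alpha>) = (1 + \<alpha>)\<^sup>2 / (4 * \<alpha>)" using assms
    by (simp add: field_simps power2_eq_square)
  show "\<exists>C. \<forall>m::nat. \<forall>part sched. m \<ge> 1 \<and> valid_alg_inf m part sched \<and> consistent_inf m (1 + \<alpha>) part sched \<longrightarrow>
            robustness_inf m part sched \<ge> ereal (1 + (1 - \<alpha>)\<^sup>2 / (4 * \<alpha>) - C / real m)"
    unfolding e2 using infl[OF assms] by blast
qed

end
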